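(* Let $A=\prod_{i=1}^n A_i$ with each $A_i\in\{\mathsf P^1,\mathbb F_2\}$, with the product bicharacter. Let $\Gamma\subseteq 2^{[n]}$ and $P=\mathop{\ast}_{\gamma\in\Gamma}P_\gamma$ with each $P_\gamma$ a probability distribution on $A$ vanishing outside $\{e:\operatorname{supp}(e)\subseteq\gamma\}$. Let $E(a)=\sum_{e\in A}\langle a,e\rangle P(e)$ and assume $E(a)\neq0$ for all $a\in A$. Define the canonical moments $F(a)=\prod_{b\le a}E(b)^{\mu(b,a)}$ with $\mu(b,a)=(-1)^{|a|-|b|}$ for $b\le a$. Then (1) $E(a)=\prod_{b\le a}F(b)$ for all $a\in A$; and (2) if $a\in A$ satisfies $\operatorname{supp}(a)\not\subseteq\gamma$ for all $\gamma\in\Gamma$, then $F(a)=1$.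
   Context: Bicharacter: on $\mathsf P^1=\{I,X,Y,Z\}$ (Paulis modulo phase) $\langle a,b\rangle=\pm1$ according to commutation/anticommutation; on $\mathbb F_2$, $\langle x,y\rangle=(-1)^{xy}$; on $A$ the product over coordinates. $\operatorname{supp}(a)=\{i:a_i\neq I\}$, $|a|=|\operatorname{supp}(a)|$. Substring order: $b\le a$ iff for every $i$ either $b_i=I$ or $b_i=a_i$. Convolution: $(f\ast g)(a)=\sum_b f(b)g(ab^{-1})$. *)

theory Defs
  imports Complex_Main
begin

text \<open>Single-site alphabet. On a Pauli site (P^1) all four letters occur;
on an F_2 site only PI (=0) and PX (=1) occur.\<close>
datatype pauli = PI | PX | PY | PZ

text \<open>Site kinds: True = Pauli site P^1, False = F_2 site.\<close>

text \<open>Group law at one site (Pauli product modulo phase; on F_2 this is addition).\<close>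
fun site_mult :: "pauli \<Rightarrow> pauli \<Rightarrow> pauli" where
  "site_mult PI b = b"
| "site_mult a PI = a"
| "site_mult PX PX = PI" | "site_mult PY PY = PI" | "site_mult PZ PZ = PI"
| "site_mult PX PY = PZ" | "site_mult PY PX = PZ"
| "site_mult PX PZ = PY" | "site_mult PZ PX = PY"
| "site_mult PY PZ = PX" | "site_mult PZ PY = PX"

definition site_inv :: "pauli \<Rightarrow> pauli" where "site_inv a = a"

text \<open>Site bicharacter: commutation sign on P^1, (-1)^{xy} on F_2.\<close>
definition site_char :: "bool \<Rightarrow> pauli \<Rightarrow> pauli \<Rightarrow> real" where
  "site_char pauli_site a b =
     (if pauli_site then (if a = PI \<or> b = PI \<or> a = b then 1 else -1)
      else (if a = PX \<and> b = PX then -1 else 1))"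

text \<open>The group A = prod_{i<n} A_i, sites indexed by 0..n-1.\<close>
definition carrierA :: "nat \<Rightarrow> (nat \<Rightarrow> bool) \<Rightarrow> (nat \<Rightarrow> pauli) set" where
  "carrierA n kind = {a. \<forall>i. (i < n \<longrightarrow> (\<not> kind i \<longrightarrow> a i \<in> {PI, PX})) \<and> (n \<le> i \<longrightarrow> a i = PI)}"

definition multA :: "(nat \<Rightarrow> pauli) \<Rightarrow> (nat \<Rightarrow> pauli) \<Rightarrow> (nat \<Rightarrow> pauli)" where
  "multA a b = (\<lambda>i. site_mult (a i) (b i))"

definition invA :: "(nat \<Rightarrow> pauli) \<Rightarrow> (nat \<Rightarrow> pauli)" where
  "invA a = (\<lambda>i. site_inv (a i))"

definition oneA :: "nat \<Rightarrow> pauli" where "oneA = (\<lambda>i. PI)"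

definition charA :: "nat \<Rightarrow> (nat \<Rightarrow> bool) \<Rightarrow> (nat \<Rightarrow> pauli) \<Rightarrow> (nat \<Rightarrow> pauli) \<Rightarrow> real" where
  "charA n kind a b = (\<Prod>i<n. site_char (kind i) (a i) (b i))"

definition supp :: "nat \<Rightarrow> (nat \<Rightarrow> pauli) \<Rightarrow> nat set" where
  "supp n a = {i. i < n \<and> a i \<noteq> PI}"

definition substr_le :: "nat \<Rightarrow> (nat \<Rightarrow> pauli) \<Rightarrow> (nat \<Rightarrow> pauli) \<Rightarrow> bool" where
  "substr_le n b a = (\<forall>i<n. b i = PI \<or> b i = a i)"

definition conv :: "nat \<Rightarrow> (nat \<Rightarrow> bool) \<Rightarrow> ((nat \<Rightarrow> pauli) \<Rightarrow> real) \<Rightarrow> ((nat \<Rightarrow> pauli) \<Rightarrow> real)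
     \<Rightarrow> (nat \<Rightarrow> pauli) \<Rightarrow> real" where
  "conv n kind f g a = (\<Sum>b\<in>carrierA n kind. f b * g (multA a (invA b)))"

definition delta1 :: "(nat \<Rightarrow> pauli) \<Rightarrow> real" where
  "delta1 a = (if a = oneA then 1 else 0)"

text \<open>Iterated convolution over an enumeration of \<Gamma> (order irrelevant, A abelian).\<close>
definition bigconv :: "nat \<Rightarrow> (nat \<Rightarrow> bool) \<Rightarrow> nat set list \<Rightarrow> (nat set \<Rightarrow> (nat \<Rightarrow> pauli) \<Rightarrow> real)
     \<Rightarrow> (nat \<Rightarrow> pauli) \<Rightarrow> real" where
  "bigconv n kind gs Pg = foldr (\<lambda>\<gamma> acc. conv n kind (Pg \<gamma>) acc) gs delta1"

definition is_distribution :: "nat \<Rightarrow> (nat \<Rightarrow> bool) \<Rightarrow> ((nat \<Rightarrow> pauli) \<Rightarrow> real) \<Rightarrow> bool" where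
  "is_distribution n kind p \<longleftrightarrow> (\<forall>e. p e \<ge> 0) \<and> (\<forall>e. e \<notin> carrierA n kind \<longrightarrow> p e = 0)
     \<and> (\<Sum>e\<in>carrierA n kind. p e) = 1"

definition moment :: "nat \<Rightarrow> (nat \<Rightarrow> bool) \<Rightarrow> ((nat \<Rightarrow> pauli) \<Rightarrow> real) \<Rightarrow> (nat \<Rightarrow> pauli) \<Rightarrow> real" where
  "moment n kind P a = (\<Sum>e\<in>carrierA n kind. charA n kind a e * P e)"

definition canon_moment :: "nat \<Rightarrow> (nat \<Rightarrow> bool) \<Rightarrow> ((nat \<Rightarrow> pauli) \<Rightarrow> real) \<Rightarrow> (nat \<Rightarrow> pauli) \<Rightarrow> real" where
  "canon_moment n kind E a =
     (\<Prod>b\<in>{b\<in>carrierA n kind. substr_le n b a}.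
        E b powi ((-1::int) ^ (card (supp n a) - card (supp n b))))"

end

theory Submission imports Defs begin

lemma site_char_mult:
  assumes "\<not> k \<longrightarrow> a \<in> {PI,PX} \<and> b \<in> {PI,PX} \<and> c \<in> {PI,PX}"
  shows "site_char k a (site_mult b c) = site_char k a b * site_char k a c"
  using assms by (cases a; cases b; cases c; cases k; simp add: site_char_def)

lemma site_mult_cancel: "site_mult (site_mult x y) y = x"
  by (cases x; cases y; simp)

lemma site_mult_closed: "x \<in> {PI,PX} \<Longrightarrow> y \<in> {PI,PX} \<Longrightarrow> site_mult x y \<in> {PI,PX}"
  by (cases x; cases y; auto)

lemma multA_closed: "e \<in> carrierA n k \<Longrightarrow> b \<in> carrierA n k \<Longrightarrow> multA e b \<in> carrierA n k"
  unfolding carrierA_def multA_def using site_mult_closed by auto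

lemma multA_cancel: "multA (multA e b) b = e"
  unfolding multA_def by (simp add: site_mult_cancel)

lemma invA_id: "invA b = b" unfolding invA_def site_inv_def by simp

lemma charA_mult:
  assumes "a \<in> carrierA n k" "e \<in> carrierA n k" "b \<in> carrierA n k"
  shows "charA n k a (multA e b) = charA n k a e * charA n k a b"
  unfolding charA_def multA_def prod.distrib[symmetric]
proof (rule prod.cong[OF refl])
  fix i assume "i \<in> {..<n}"
  then show "site_char (k i) (a i) (site_mult (e i) (b i)) = site_char (k i) (a i) (e i) * site_char (k i) (a i) (b i)"
    using assms by (intro site_char_mult) (auto simp: carrierA_def)
qed

lemma reindex_mult:
  assumes "b \<in> carrierA n k"
  shows "(\<Sum>e\<in>carrierA n k. \<phi> (multA e b)) = (\<Sum>e\<in>carrierA n k. \<phi> e)"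
  by (rule sum.reindex_bij_witness[where i="\<lambda>e. multA e b" and j="\<lambda>e. multA e b"])
     (auto simp: multA_cancel multA_closed assms)

lemma moment_conv:
  assumes "a \<in> carrierA n k"
  shows "moment n k (conv n k f g) a = moment n k f a * moment n k g a"
proof -
  have inner: "(\<Sum>e\<in>carrierA n k. charA n k a e * g (multA e b)) = charA n k a b * moment n k g a"
    if b: "b \<in> carrierA n k" for b
  proof -
    have "(\<Sum>e\<in>carrierA n k. charA n k a e * g (multA e b))
        = (\<Sum>e\<in>carrierA n k. charA n k a (multA e b) * g (multA (multA e b) b))"
      using reindex_mult[OF b, of "\<lambda>e. charA n k a e * g (multA e b)"] by simp
    also have "\<dots> = (\<Sum>e\<in>carrierA n k. charA n k a b * (charA n k a e * g e))"
      by (rule sum.cong[OF refl]) (simp add: charA_mult[OF assms _ b] multA_cancel)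
    also have "\<dots> = charA n k a b * moment n k g a"
      unfolding moment_def sum_distrib_left ..
    finally show ?thesis .
  qed
  have "moment n k (conv n k f g) a
     = (\<Sum>e\<in>carrierA n k. \<Sum>b\<in>carrierA n k. f b * (charA n k a e * g (multA e b)))"
    unfolding moment_def conv_def invA_id sum_distrib_left by (simp add: ac_simps)
  also have "\<dots> = (\<Sum>b\<in>carrierA n k. f b * (\<Sum>e\<in>carrierA n k. charA n k a e * g (multA e b)))"
    by (subst sum.swap) (simp add: sum_distrib_left)
  also have "\<dots> = (\<Sum>b\<in>carrierA n k. f b * (charA n k a b * moment n k g a))"
    by (rule sum.cong[OF refl]) (simp add: inner)
  also have "\<dots> = moment n k f a * moment n k g a"
    unfolding moment_def sum_distrib_right by (simp add: ac_simps)
  finally show ?thesis .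
qed

lemma finite_carrierA: "finite (carrierA n k)"
proof -
  have "carrierA n k \<subseteq> (\<lambda>xs i. if i < n then xs ! i else PI) ` {xs. set xs \<subseteq> {PI,PX,PY,PZ} \<and> length xs = n}"
  proof
    fix a assume a: "a \<in> carrierA n k"
    have "a = (\<lambda>i. if i < n then map a [0..<n] ! i else PI)"
      using a by (auto simp: carrierA_def)
    moreover have "set (map a [0..<n]) \<subseteq> {PI,PX,PY,PZ}" by (auto intro: pauli.exhaust)
    ultimately show "a \<in> (\<lambda>xs i. if i < n then xs ! i else PI) ` {xs. set xs \<subseteq> {PI,PX,PY,PZ} \<and> length xs = n}"
      by (intro image_eqI[where x="map a [0..<n]"]) auto
  qed
  moreover have "finite {xs. set xs \<subseteq> {PI,PX,PY,PZ} \<and> length xs = n}"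
    by (rule finite_lists_length_eq) simp
  ultimately show ?thesis by (rule finite_subset[OF _ finite_imageI])
qed


lemma oneA_carrier: "oneA \<in> carrierA n k" unfolding carrierA_def oneA_def by auto

lemma moment_delta1: "moment n k delta1 a = 1"
proof -
  have "moment n k delta1 a = (\<Sum>e\<in>carrierA n k. if e = oneA then charA n k a oneA else 0)"
    unfolding moment_def delta1_def by (rule sum.cong) auto
  also have "\<dots> = charA n k a oneA" using oneA_carrier finite_carrierA by (simp add: sum.delta')
  also have "\<dots> = 1" unfolding charA_def oneA_def by (rule prod.neutral) (simp add: site_char_def)
  finally show ?thesis .
qed

lemma moment_bigconv:
  assumes "a \<in> carrierA n k"
  shows "moment n k (bigconv n k gs Pg) a = (\<Prod>\<gamma>\<leftarrow>gs. moment n k (Pg \<gamma>) a)"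
  by (induction gs) (simp_all add: bigconv_def moment_delta1 moment_conv[OF assms])




lemma substr_trans: "substr_le n c b \<Longrightarrow> substr_le n b a \<Longrightarrow> substr_le n c a"
  unfolding substr_le_def
proof (intro allI impI)
  fix i assume h: "\<forall>i<n. c i = PI \<or> c i = b i" "\<forall>i<n. b i = PI \<or> b i = a i" and i: "i < n"
  have "c i = PI \<or> c i = b i" "b i = PI \<or> b i = a i" using h i by auto
  then show "c i = PI \<or> c i = a i" by auto
qed

lemma substr_antisym: "a \<in> carrierA n k \<Longrightarrow> b \<in> carrierA n k \<Longrightarrow> substr_le n a b \<Longrightarrow> substr_le n b a \<Longrightarrow> a = b"
proof (rule ext)
  fix i assume h: "a \<in> carrierA n k" "b \<in> carrierA n k" "substr_le n a b" "substr_le n b a"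
  show "a i = b i"
  proof (cases "i < n")
    case True
    have "a i = PI \<or> a i = b i" "b i = PI \<or> b i = a i" using h True unfolding substr_le_def by auto
    then show ?thesis by auto
  next
    case False
    then show ?thesis using h unfolding carrierA_def by auto
  qed
qed

lemma finite_supp: "finite (supp n a)" unfolding supp_def by auto

lemma supp_upd: "i < n \<Longrightarrow> y \<noteq> PI \<Longrightarrow> supp n (c(i:=y)) = insert i (supp n c)"
  unfolding supp_def by auto

lemma prod_toggle:
  fixes f :: "(nat \<Rightarrow> pauli) \<Rightarrow> 'b::comm_monoid_mult"
  assumes "finite X" "x \<noteq> PI"
    and "\<forall>b\<in>X. b i = PI \<or> b i = x" "\<forall>b\<in>X. b(i:=PI) \<in> X" "\<forall>b\<in>X. b(i:=x) \<in> X"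
  shows "prod f X = (\<Prod>b\<in>{b\<in>X. b i = PI}. f b * f (b(i:=x)))"
proof -
  define X0 where "X0 = {b\<in>X. b i = PI}"
  define X1 where "X1 = {b\<in>X. b i = x}"
  have X: "X = X0 \<union> X1" using assms(3) unfolding X0_def X1_def by blast
  have d: "X0 \<inter> X1 = {}" using assms(2) unfolding X0_def X1_def by auto
  have img: "X1 = (\<lambda>b. b(i:=x)) ` X0"
  proof
    show "X1 \<subseteq> (\<lambda>b. b(i:=x)) ` X0"
    proof
      fix b assume b: "b \<in> X1"
      then have "b = (b(i:=PI))(i:=x)" unfolding X1_def by auto
      moreover have "b(i:=PI) \<in> X0" using b assms(4) unfolding X0_def X1_def by auto
      ultimately show "b \<in> (\<lambda>b. b(i:=x)) ` X0" by blast
    qed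
    show "(\<lambda>b. b(i:=x)) ` X0 \<subseteq> X1"
    proof
      fix c assume "c \<in> (\<lambda>b. b(i:=x)) ` X0"
      then obtain b where b: "b \<in> X0" "c = b(i:=x)" by blast
      then show "c \<in> X1" using assms(5) unfolding X0_def X1_def by simp
    qed
  qed
  have inj: "inj_on (\<lambda>b. b(i:=x)) X0"
  proof (rule inj_onI)
    fix b c assume bc: "b \<in> X0" "c \<in> X0" and e: "b(i:=x) = c(i:=x)"
    show "b = c"
    proof
      fix j show "b j = c j"
        using bc fun_cong[OF e, of j] unfolding X0_def by (cases "j = i") auto
    qed
  qed
  have fin: "finite X0" "finite X1" using assms(1) unfolding X0_def X1_def by auto
  have "prod f X = prod f X0 * prod f X1"
    unfolding X using prod.union_disjoint[OF fin d] .
  also have "prod f X1 = (\<Prod>b\<in>X0. f (b(i:=x)))"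
    unfolding img by (subst prod.reindex[OF inj]) simp
  finally show ?thesis unfolding X0_def by (simp add: prod.distrib)
qed

lemma card_supp_upd: "i < n \<Longrightarrow> y \<noteq> PI \<Longrightarrow> c i = PI \<Longrightarrow> card (supp n (c(i:=y))) = Suc (card (supp n c))"
  by (simp add: supp_upd finite_supp) (simp add: supp_def)

lemma supp_mono: "substr_le n c a \<Longrightarrow> supp n c \<subseteq> supp n a"
  unfolding supp_def substr_le_def by auto

lemma card_supp_mono: "substr_le n c a \<Longrightarrow> card (supp n c) \<le> card (supp n a)"
  by (intro card_mono finite_supp supp_mono)

lemma upd_carrier: "b \<in> carrierA n k \<Longrightarrow> a \<in> carrierA n k \<Longrightarrow> i < n \<Longrightarrow> b(i:=a i) \<in> carrierA n k"
  unfolding carrierA_def by auto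

lemma upd_carrier_PI: "b \<in> carrierA n k \<Longrightarrow> b(i:=PI) \<in> carrierA n k"
  unfolding carrierA_def by auto

lemma powi_pair: "(x::real) \<noteq> 0 \<Longrightarrow> x powi m * x powi (- m) = 1"
  by (simp add: power_int_minus power_int_not_zero)

lemma mobius:
  fixes E :: "(nat \<Rightarrow> pauli) \<Rightarrow> real"
  assumes a: "a \<in> carrierA n k" and nz: "\<forall>c\<in>{c\<in>carrierA n k. substr_le n c a}. E c \<noteq> 0"
  shows "E a = (\<Prod>b\<in>{b\<in>carrierA n k. substr_le n b a}. canon_moment n k E b)"
proof -
  let ?S = "{b\<in>carrierA n k. substr_le n b a}"
  have fS: "finite ?S" using finite_carrierA by auto
  let ?g = "\<lambda>b c. E c powi ((-1::int) ^ (card (supp n b) - card (supp n c)))"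
  have "(\<Prod>b\<in>?S. canon_moment n k E b) = (\<Prod>b\<in>?S. \<Prod>c\<in>{c\<in>?S. substr_le n c b}. ?g b c)"
  proof (rule prod.cong[OF refl])
    fix b assume b: "b \<in> ?S"
    have "{c\<in>carrierA n k. substr_le n c b} = {c\<in>?S. substr_le n c b}"
      using b substr_trans by blast
    then show "canon_moment n k E b = (\<Prod>c\<in>{c\<in>?S. substr_le n c b}. ?g b c)"
      unfolding canon_moment_def by simp
  qed
  also have "\<dots> = (\<Prod>c\<in>?S. \<Prod>b\<in>{b\<in>?S. substr_le n c b}. ?g b c)"
    by (rule prod.swap_restrict[OF fS fS])
  also have "\<dots> = (\<Prod>c\<in>?S. if c = a then E a else 1)"
  proof (rule prod.cong[OF refl])
    fix c assume c: "c \<in> ?S"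
    show "(\<Prod>b\<in>{b\<in>?S. substr_le n c b}. ?g b c) = (if c = a then E a else 1)"
    proof (cases "c = a")
      case True
      have "{b\<in>?S. substr_le n c b} = {a}"
        using True a substr_antisym by (auto simp: substr_le_def)
      then show ?thesis using True by simp
    next
      case False
      obtain i where i: "i < n" "c i \<noteq> a i"
      proof -
        have "\<exists>i<n. c i \<noteq> a i"
        proof (rule ccontr)
          assume "\<not> ?thesis"
          then have "substr_le n a c" using c by (auto simp: substr_le_def)
          then show False using substr_antisym[of c n k a] c a False by auto
        qed
        then show ?thesis using that by blast
      qed
      have ci: "c i = PI" "a i \<noteq> PI" using i c by (auto simp: substr_le_def)
      let ?X = "{b\<in>?S. substr_le n c b}"
      have "(\<Prod>b\<in>?X. ?g b c) = (\<Prod>b\<in>{b\<in>?X. b i = PI}. ?g b c * ?g (b(i:=a i)) c)"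
      proof (rule prod_toggle)
        show "finite ?X" using fS by (rule finite_subset[rotated]) blast
        show "\<forall>b\<in>?X. b i = PI \<or> b i = a i" using i by (auto simp: substr_le_def)
        show "\<forall>b\<in>?X. b(i:=PI) \<in> ?X" using ci i by (auto simp: substr_le_def upd_carrier_PI)
        show "\<forall>b\<in>?X. b(i:=a i) \<in> ?X" using ci a i by (auto simp: substr_le_def upd_carrier)
      qed (use ci in auto)
      also have "\<dots> = (\<Prod>b\<in>{b\<in>?X. b i = PI}. 1)"
      proof (rule prod.cong[OF refl])
        fix b assume b: "b \<in> {b\<in>?X. b i = PI}"
        have cb: "card (supp n c) \<le> card (supp n b)" using b card_supp_mono by blast
        have "card (supp n (b(i:=a i))) - card (supp n c) = Suc (card (supp n b) - card (supp n c))"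
          using card_supp_upd[of i n "a i" b] b ci i cb by simp
        then have "?g (b(i:=a i)) c = E c powi (- ((-1::int) ^ (card (supp n b) - card (supp n c))))"
          by simp
        then show "?g b c * ?g (b(i:=a i)) c = 1"
          using powi_pair nz c by simp
      qed
      finally show ?thesis using False by simp
    qed
  qed
  also have "\<dots> = E a" using a fS by (simp add: prod.delta' substr_le_def)
  finally show ?thesis by simp
qed


lemma moment_local:
  assumes P: "\<forall>e. \<not> supp n e \<subseteq> \<gamma> \<longrightarrow> P e = 0" and i: "i < n" "i \<notin> \<gamma>"
  shows "moment n k P (c(i:=y)) = moment n k P c"
  unfolding moment_def
proof (rule sum.cong[OF refl])
  fix e assume "e \<in> carrierA n k"
  show "charA n k (c(i:=y)) e * P e = charA n k c e * P e"
  proof (cases "P e = 0")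
    case False
    then have "supp n e \<subseteq> \<gamma>" using P by blast
    then have ei: "e i = PI" using i unfolding supp_def by blast
    have "charA n k (c(i:=y)) e = charA n k c e"
      unfolding charA_def
    proof (rule prod.cong[OF refl])
      fix j assume "j \<in> {..<n}"
      show "site_char (k j) ((c(i:=y)) j) (e j) = site_char (k j) (c j) (e j)"
        using ei by (cases "j = i") (auto simp: site_char_def)
    qed
    then show ?thesis by simp
  qed simp
qed

lemma power_int_prod: "finite A \<Longrightarrow> (\<Prod>x\<in>A. f x :: real) powi m = (\<Prod>x\<in>A. f x powi m)"
  by (induction A rule: finite_induct) (simp_all add: power_int_mult_distrib)

lemma vanish:
  fixes Eg :: "nat set \<Rightarrow> (nat \<Rightarrow> pauli) \<Rightarrow> real"
  assumes a: "a \<in> carrierA n k" and G: "finite G" and ns: "\<forall>\<gamma>\<in>G. \<not> supp n a \<subseteq> \<gamma>"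
    and loc: "\<forall>\<gamma>\<in>G. \<forall>c i y. i < n \<longrightarrow> i \<notin> \<gamma> \<longrightarrow> Eg \<gamma> (c(i:=y)) = Eg \<gamma> c"
    and nz: "\<forall>c\<in>{c\<in>carrierA n k. substr_le n c a}. (\<Prod>\<gamma>\<in>G. Eg \<gamma> c) \<noteq> 0"
  shows "canon_moment n k (\<lambda>c. \<Prod>\<gamma>\<in>G. Eg \<gamma> c) a = 1"
proof -
  let ?S = "{c\<in>carrierA n k. substr_le n c a}"
  have fS: "finite ?S" using finite_carrierA by auto
  let ?mu = "\<lambda>c. (-1::int) ^ (card (supp n a) - card (supp n c))"
  have "canon_moment n k (\<lambda>c. \<Prod>\<gamma>\<in>G. Eg \<gamma> c) a = (\<Prod>c\<in>?S. \<Prod>\<gamma>\<in>G. Eg \<gamma> c powi ?mu c)"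
    unfolding canon_moment_def by (rule prod.cong[OF refl]) (simp add: power_int_prod[OF G])
  also have "\<dots> = (\<Prod>\<gamma>\<in>G. \<Prod>c\<in>?S. Eg \<gamma> c powi ?mu c)"
    by (rule prod.swap)
  also have "\<dots> = (\<Prod>\<gamma>\<in>G. 1)"
  proof (rule prod.cong[OF refl])
    fix \<gamma> assume g: "\<gamma> \<in> G"
    obtain i where i: "i \<in> supp n a" "i \<notin> \<gamma>" using ns g by blast
    have ia: "i < n" "a i \<noteq> PI" using i unfolding supp_def by auto
    have "(\<Prod>c\<in>?S. Eg \<gamma> c powi ?mu c) = (\<Prod>c\<in>{c\<in>?S. c i = PI}. Eg \<gamma> c powi ?mu c * Eg \<gamma> (c(i:=a i)) powi ?mu (c(i:=a i)))"
    proof (rule prod_toggle[OF fS ia(2)])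
      show "\<forall>b\<in>?S. b i = PI \<or> b i = a i" using ia by (auto simp: substr_le_def)
      show "\<forall>b\<in>?S. b(i:=PI) \<in> ?S" using ia by (auto simp: substr_le_def upd_carrier_PI)
      show "\<forall>b\<in>?S. b(i:=a i) \<in> ?S" using a ia by (auto simp: substr_le_def upd_carrier)
    qed
    also have "\<dots> = (\<Prod>c\<in>{c\<in>?S. c i = PI}. 1)"
    proof (rule prod.cong[OF refl])
      fix c assume c: "c \<in> {c\<in>?S. c i = PI}"
      have "supp n c \<subset> supp n a"
        using supp_mono[of n c a] c i unfolding supp_def by auto
      then have lt: "card (supp n c) < card (supp n a)" by (rule psubset_card_mono[OF finite_supp])
      define d where "d = card (supp n a) - card (supp n c) - 1"
      have d: "card (supp n a) - card (supp n c) = Suc d" using lt unfolding d_def by simp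
      have cs: "card (supp n (c(i:=a i))) = Suc (card (supp n c))"
        using card_supp_upd[of i n "a i" c] c ia by simp
      have d2: "card (supp n a) - Suc (card (supp n c)) = d" using d by simp
      have mu: "?mu (c(i:=a i)) = - ?mu c" unfolding cs d2 d by simp
      have E: "Eg \<gamma> (c(i:=a i)) = Eg \<gamma> c" using loc g ia(1) i(2) by simp
      have "(\<Prod>\<gamma>\<in>G. Eg \<gamma> c) \<noteq> 0" using nz c by blast
      then have "Eg \<gamma> c \<noteq> 0" using G g prod_zero_iff by blast
      then show "Eg \<gamma> c powi ?mu c * Eg \<gamma> (c(i:=a i)) powi ?mu (c(i:=a i)) = 1"
        unfolding mu E by (rule powi_pair)
    qed
    finally show "(\<Prod>c\<in>?S. Eg \<gamma> c powi ?mu c) = 1" by simp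
  qed
  finally show ?thesis by simp
qed

theorem lemma5:
  fixes n :: nat and kind :: "nat \<Rightarrow> bool"
    and gs :: "nat set list" and Pg :: "nat set \<Rightarrow> (nat \<Rightarrow> pauli) \<Rightarrow> real"
  assumes "distinct gs"
    and "\<forall>\<gamma>\<in>set gs. \<gamma> \<subseteq> {..<n}"
    and "\<forall>\<gamma>\<in>set gs. is_distribution n kind (Pg \<gamma>)"
    and "\<forall>\<gamma>\<in>set gs. \<forall>e. \<not> supp n e \<subseteq> \<gamma> \<longrightarrow> Pg \<gamma> e = 0"
    and "\<forall>a\<in>carrierA n kind. moment n kind (bigconv n kind gs Pg) a \<noteq> 0"
  shows "(\<forall>a\<in>carrierA n kind.
            moment n kind (bigconv n kind gs Pg) a =
            (\<Prod>b\<in>{b\<in>carrierA n kind. substr_le n b a}.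
               canon_moment n kind (moment n kind (bigconv n kind gs Pg)) b))
       \<and> (\<forall>a\<in>carrierA n kind. (\<forall>\<gamma>\<in>set gs. \<not> supp n a \<subseteq> \<gamma>) \<longrightarrow>
            canon_moment n kind (moment n kind (bigconv n kind gs Pg)) a = 1)"
proof -
  let ?E = "moment n kind (bigconv n kind gs Pg)"
  have Eeq: "?E c = (\<Prod>\<gamma>\<in>set gs. moment n kind (Pg \<gamma>) c)" if "c \<in> carrierA n kind" for c
    using moment_bigconv[OF that, of gs Pg] prod.distinct_set_conv_list[OF assms(1), of "\<lambda>\<gamma>. moment n kind (Pg \<gamma>) c"] by simp
  have P1: "\<forall>a\<in>carrierA n kind. ?E a =
            (\<Prod>b\<in>{b\<in>carrierA n kind. substr_le n b a}. canon_moment n kind ?E b)"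
  proof
    fix a assume a: "a \<in> carrierA n kind"
    show "?E a = (\<Prod>b\<in>{b\<in>carrierA n kind. substr_le n b a}. canon_moment n kind ?E b)"
      by (rule mobius[OF a]) (use assms(5) in blast)
  qed
  have P2: "\<forall>a\<in>carrierA n kind. (\<forall>\<gamma>\<in>set gs. \<not> supp n a \<subseteq> \<gamma>) \<longrightarrow>
            canon_moment n kind ?E a = 1"
  proof (intro ballI impI)
    fix a assume a: "a \<in> carrierA n kind" and ns: "\<forall>\<gamma>\<in>set gs. \<not> supp n a \<subseteq> \<gamma>"
    have "canon_moment n kind ?E a = canon_moment n kind (\<lambda>c. \<Prod>\<gamma>\<in>set gs. moment n kind (Pg \<gamma>) c) a"
      unfolding canon_moment_def by (rule prod.cong[OF refl]) (simp add: Eeq)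
    also have "\<dots> = 1"
    proof (rule vanish[OF a finite_set ns])
      show "\<forall>\<gamma>\<in>set gs. \<forall>c i y. i < n \<longrightarrow> i \<notin> \<gamma> \<longrightarrow>
          moment n kind (Pg \<gamma>) (c(i:=y)) = moment n kind (Pg \<gamma>) c"
        using moment_local assms(4) by blast
      show "\<forall>c\<in>{c\<in>carrierA n kind. substr_le n c a}. (\<Prod>\<gamma>\<in>set gs. moment n kind (Pg \<gamma>) c) \<noteq> 0"
        using assms(5) Eeq by simp
    qed
    finally show "canon_moment n kind ?E a = 1" .
  qed
  show ?thesis using P1 P2 by blast
qed

end
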